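(* Let $V$ be a real vector space of dimension $m$, $\Gamma$ a finitely generated free abelian dense subgroup of $V$ acting by translations, and $\mathcal C$ a countable $\Gamma$-invariant collection of affine hyperplanes of $V$ with finitely many $\Gamma$-orbits and normals spanning $V$. Let $\mathcal W=\{W_1,\dots,W_f\}\subset\mathcal C$ with $f>m$ such that the set of normal directions of $W_1,\dots,W_f$ is indecomposable. Suppose that $\mathcal P$ consists of finitely many $\Gamma$-orbits. Then for every $0\le l\le m$ and every $A\in\mathcal I_l$, $$\mathrm{rk}\,\Gamma^A=l\,\frac{\mathrm{rk}\,\Gamma}{\dim V}.$$ In particular $\dim V$ divides $\mathrm{rk}\,\Gamma$.
   Context: $\mathcal P$ is the set of points that are $0$-dimensional intersections of $m$ elements of $\mathcal C$. For $A\subset\{1,\dots,f\}$, $W_A=\bigcap_{i\in A}W_i$, and $\Gamma^A\subset\Gamma$ is the stabilizer of $W_A$ (those $\gamma$ with $W_A+\gamma=W_A$). $\mathcal I_l$ is the collection of subsets $A\subset\{1,\dots,f\}$ with $m-l$ elements such that $W_A$ has dimension $l$. A finite set of pairwise non-parallel nonzero vectors spanning $V$ is indecomposable if it admits no partition $A_1\cup A_2$ into nonempty parts with $\mathrm{span}(A_1)\cap\mathrm{span}(A_2)=0$. *)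

theory Defs
  imports "HOL-Analysis.Analysis"
begin

definition int_independent :: "'v::real_vector set \<Rightarrow> bool" where
  "int_independent S \<longleftrightarrow>
     (\<forall>F c. finite F \<longrightarrow> F \<subseteq> S \<longrightarrow> (\<Sum>x\<in>F. of_int (c x) *\<^sub>R x) = 0 \<longrightarrow> (\<forall>x\<in>F. c x = (0::int)))"

definition int_span :: "'v::real_vector set \<Rightarrow> 'v set" where
  "int_span B = {\<Sum>x\<in>B. of_int (c x) *\<^sub>R x | c :: 'v \<Rightarrow> int. True}"

definition group_rank :: "'v::real_vector set \<Rightarrow> nat" where
  "group_rank G = Sup {card S | S. S \<subseteq> G \<and> finite S \<and> int_independent S}"

definition fg_free_subgroup :: "'v::real_vector set \<Rightarrow> bool" where
  "fg_free_subgroup G \<longleftrightarrow> (\<exists>B. finite B \<and> int_independent B \<and> G = int_span B)"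

definition affine_hyperplane :: "'v::euclidean_space set \<Rightarrow> bool" where
  "affine_hyperplane H \<longleftrightarrow> (\<exists>a b. a \<noteq> 0 \<and> H = {x. a \<bullet> x = b})"

definition normals :: "'v::euclidean_space set set \<Rightarrow> 'v set" where
  "normals C = {a. a \<noteq> 0 \<and> (\<exists>H\<in>C. \<exists>b. H = {x. a \<bullet> x = b})}"

definition translate :: "'v::real_vector \<Rightarrow> 'v set \<Rightarrow> 'v set" where
  "translate g H = (\<lambda>x. x + g) ` H"

definition finitely_many_orbits :: "'v::real_vector set \<Rightarrow> 'v set set \<Rightarrow> bool" where
  "finitely_many_orbits G C \<longleftrightarrow> (\<exists>F. finite F \<and> F \<subseteq> C \<and> C = {translate g H | g H. g \<in> G \<and> H \<in> F})"

definition finitely_many_point_orbits :: "'v::real_vector set \<Rightarrow> 'v set \<Rightarrow> bool" where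
  "finitely_many_point_orbits G P \<longleftrightarrow> (\<exists>Q. finite Q \<and> Q \<subseteq> P \<and> P = {q + g | q g. q \<in> Q \<and> g \<in> G})"

definition vertex_set :: "nat \<Rightarrow> 'v::real_vector set set \<Rightarrow> 'v set" where
  "vertex_set m C = {p. \<exists>S. S \<subseteq> C \<and> finite S \<and> card S = m \<and> \<Inter>S = {p}}"

text \<open>Indecomposability of the set of directions spanned by the vectors n i, i in I.
  (Parallel vectors placed in different parts automatically give a nonzero common span,
  so this is exactly indecomposability of the set of normal directions.)\<close>
definition indecomposable :: "(nat \<Rightarrow> 'v::euclidean_space) \<Rightarrow> nat set \<Rightarrow> bool" where
  "indecomposable n I \<longleftrightarrow> (\<forall>i\<in>I. n i \<noteq> 0) \<and> span (n ` I) = UNIV \<and>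
     \<not> (\<exists>I1 I2. I1 \<noteq> {} \<and> I2 \<noteq> {} \<and> I1 \<union> I2 = I \<and> I1 \<inter> I2 = {} \<and>
            span (n ` I1) \<inter> span (n ` I2) = {0})"

definition W_int :: "(nat \<Rightarrow> 'v set) \<Rightarrow> nat set \<Rightarrow> 'v set" where
  "W_int W A = (\<Inter>i\<in>A. W i)"

definition stabilizer :: "'v::real_vector set \<Rightarrow> 'v set \<Rightarrow> 'v set" where
  "stabilizer G X = {g \<in> G. translate g X = X}"

definition I_set :: "(nat \<Rightarrow> 'v::euclidean_space set) \<Rightarrow> nat \<Rightarrow> nat \<Rightarrow> nat set set" where
  "I_set W f l = {A. A \<subseteq> {1..f} \<and> card A = DIM('v) - l \<and> aff_dim (W_int W A) = int l}"

end

theory Submission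
  imports Defs
begin
definition qs :: "rat \<Rightarrow> 'a::real_vector \<Rightarrow> 'a" where
  "qs q x = of_rat q *\<^sub>R x"

interpretation Q: vector_space "qs :: rat \<Rightarrow> 'a::real_vector \<Rightarrow> 'a"
  by unfold_locales (simp_all add: qs_def scaleR_add_right scaleR_add_left of_rat_add of_rat_mult)

lemma real_linear_Q:
  assumes "linear f"
  shows "Vector_Spaces.linear qs qs f"
  using assms unfolding Vector_Spaces.linear_iff
  by (auto simp: qs_def linear_add linear_scale Q.vector_space_axioms)

lemma Q_subspace_real:
  assumes "subspace Z"
  shows "Q.subspace Z"
  using assms unfolding Q.subspace_def subspace_def qs_def by auto

context vector_space begin
lemma span_disjoint_parts:
  assumes "independent B" "K \<subseteq> B" "finite B" "x \<in> span K" "x \<in> span (B - K)"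
  shows "x = 0"
proof -
  have "finite (B - K)" using assms by auto
  then show ?thesis using assms(1,2,4,5)
  proof (induction "B - K" arbitrary: B x rule: finite_induct)
    case empty then show ?case by simp
  next
    case (insert a E)
    have aB: "a \<in> B" "a \<notin> K" using insert.hyps(4) by auto
    have "x \<in> span (insert a E)" using insert.prems(4) insert.hyps(4) by simp
    then obtain k where k: "x - k *s a \<in> span E"
      using span_breakdown_eq by blast
    have "k *s a = x - (x - k *s a)" by simp
    moreover have "x \<in> span (K \<union> E)" using insert.prems(3) span_mono by blast
    moreover have "x - k *s a \<in> span (K \<union> E)" using k span_mono by blast
    ultimately have ka: "k *s a \<in> span (K \<union> E)" by (metis span_diff)
    have KE: "K \<union> E = B - {a}" using insert.hyps insert.prems aB by auto
    have "k = 0"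
    proof (rule ccontr)
      assume "k \<noteq> 0"
      then have "a \<in> span (K \<union> E)" using span_scale[OF ka, of "inverse k"] by simp
      then show False using insert.prems(1) aB KE dependent_def by auto
    qed
    then have "x \<in> span E" using k by simp
    moreover have "E = (B - {a}) - K" using insert.hyps aB by auto
    moreover have "independent (B - {a})" using insert.prems(1) independent_mono by blast
    ultimately show ?case using insert.hyps(3)[of "B - {a}" x] insert.prems aB by auto
  qed
qed
end

lemma rank_nullity_Q:
  fixes f :: "'a::real_vector \<Rightarrow> 'a"
  assumes lin: "Vector_Spaces.linear qs qs f" and fin: "finite S"
  shows "Q.dim (Q.span S) = Q.dim (Q.span S \<inter> {x. f x = 0}) + Q.dim (f ` Q.span S)"
proof -
  let ?U = "Q.span S"
  interpret L: Vector_Spaces.linear qs qs f by (rule lin)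
  obtain K where K: "K \<subseteq> ?U \<inter> {x. f x = 0}" "Q.independent K" "?U \<inter> {x. f x = 0} \<subseteq> Q.span K"
     "card K = Q.dim (?U \<inter> {x. f x = 0})"
    by (rule Q.basis_exists)
  obtain B where B: "K \<subseteq> B" "B \<subseteq> ?U" "Q.independent B" "?U \<subseteq> Q.span B"
    using Q.maximal_independent_subset_extend[of K ?U] K by auto
  have finB: "finite B" using Q.independent_span_bound[OF fin B(3) B(2)] by auto
  have cardB: "card B = Q.dim ?U" using Q.basis_card_eq_dim[OF B(2) B(4) B(3)] .
  have spanB: "Q.span B = ?U"
    using B(2,4) by (metis Q.span_mono Q.span_span subset_antisym)
  define E where "E = B - K"
  have injE: "inj_on f (Q.span E)"
  proof (subst L.inj_on_iff_eq_0[OF Q.subspace_span], intro ballI impI)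
    fix x assume x: "x \<in> Q.span E" "f x = 0"
    have "x \<in> ?U" using x(1) spanB Q.span_mono[of E B] E_def by auto
    then have "x \<in> Q.span K" using K(3) x(2) by auto
    then show "x = 0" using Q.span_disjoint_parts[OF B(3) B(1) finB] x(1) E_def by auto
  qed
  have indE: "Q.independent (f ` E)"
    using L.independent_injective_image[OF _ injE] B(3) E_def Q.independent_mono by blast
  have cardfE: "card (f ` E) = card E"
    using card_image[OF inj_on_subset[OF injE Q.span_superset]] .
  have fK: "f ` K \<subseteq> {0}" using K(1) by auto
  have "f ` ?U = Q.span (f ` B)" using spanB L.span_image by metis
  also have "f ` B = f ` K \<union> f ` E" using E_def B(1) by auto
  also have "Q.span (f ` K \<union> f ` E) = Q.span (f ` E)"
  proof -
    have "Q.span (f ` K \<union> f ` E) \<subseteq> Q.span (insert 0 (f ` E))"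
      by (rule Q.span_mono) (use fK in auto)
    then show ?thesis using Q.span_mono[of "f ` E" "f ` K \<union> f ` E"] by auto
  qed
  finally have "Q.dim (f ` ?U) = card E"
    using Q.dim_span_eq_card_independent[OF indE] cardfE by (metis Q.dim_span)
  moreover have "card B = card K + card E"
    using E_def B(1) finB card_Diff_subset[of K B] card_mono[OF finB B(1)] finite_subset[OF B(1) finB] by auto
  ultimately show ?thesis using cardB K(4) by auto
qed

lemma ispan_0: "0 \<in> int_span B"
  unfolding int_span_def by (rule CollectI, rule exI[of _ "\<lambda>_. 0"]) simp

lemma ispan_add: "x \<in> int_span B \<Longrightarrow> y \<in> int_span B \<Longrightarrow> x + y \<in> int_span B"
  unfolding int_span_def
proof clarify
  fix c d :: "'a \<Rightarrow> int"
  show "\<exists>e. (\<Sum>x\<in>B. of_int (c x) *\<^sub>R x) + (\<Sum>x\<in>B. of_int (d x) *\<^sub>R x) = (\<Sum>x\<in>B. of_int (e x) *\<^sub>R x) \<and> True"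
    by (rule exI[of _ "\<lambda>x. c x + d x"]) (simp add: sum.distrib scaleR_add_left)
qed

lemma ispan_smult: "x \<in> int_span B \<Longrightarrow> of_int k *\<^sub>R x \<in> int_span B"
  unfolding int_span_def
proof clarify
  fix c :: "'a \<Rightarrow> int"
  show "\<exists>e. of_int k *\<^sub>R (\<Sum>x\<in>B. of_int (c x) *\<^sub>R x) = (\<Sum>x\<in>B. of_int (e x) *\<^sub>R x) \<and> True"
    by (rule exI[of _ "\<lambda>x. k * c x"]) (simp add: scaleR_sum_right)
qed

lemma ispan_nmult: "x \<in> int_span B \<Longrightarrow> of_nat k *\<^sub>R x \<in> int_span B"
  using ispan_smult[of x B "int k"] by simp

lemma ispan_neg: "x \<in> int_span B \<Longrightarrow> - x \<in> int_span B"
  using ispan_smult[of x B "-1"] by simp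

lemma ispan_diff: "x \<in> int_span B \<Longrightarrow> y \<in> int_span B \<Longrightarrow> x - y \<in> int_span B"
  using ispan_add[OF _ ispan_neg] by (metis diff_conv_add_uminus)

lemma ispan_base: "finite B \<Longrightarrow> b \<in> B \<Longrightarrow> b \<in> int_span B"
  unfolding int_span_def
proof (rule CollectI, rule exI[of _ "\<lambda>x. if x = b then 1 else 0"])
  assume "finite B" "b \<in> B"
  have "(\<Sum>x\<in>B. real_of_int (if x = b then 1 else 0) *\<^sub>R x) = (\<Sum>x\<in>B. if x = b then x else 0)"
    by (rule sum.cong) auto
  then show "b = (\<Sum>x\<in>B. real_of_int (if x = b then 1 else 0) *\<^sub>R x) \<and> True"
    using \<open>finite B\<close> \<open>b \<in> B\<close> by (simp add: sum.delta')
qed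

lemma ispan_Qspan: "int_span B \<subseteq> Q.span B"
  unfolding int_span_def
proof clarify
  fix c :: "'a \<Rightarrow> int"
  have "(\<Sum>x\<in>B. of_int (c x) *\<^sub>R x) = (\<Sum>x\<in>B. qs (of_int (c x)) x)"
    by (simp add: qs_def)
  also have "\<dots> \<in> Q.span B"
    by (intro Q.span_sum Q.span_scale Q.span_base)
  finally show "(\<Sum>x\<in>B. of_int (c x) *\<^sub>R x) \<in> Q.span B" .
qed

lemma Qspan_ispan: "finite B \<Longrightarrow> Q.span (int_span B) = Q.span B"
  using ispan_Qspan[of B] ispan_base[of B]
  by (metis Q.span_mono Q.span_span subsetI subset_antisym)

lemma denom_ispan:
  assumes "x \<in> Q.span (int_span B)"
  shows "\<exists>k::nat. k > 0 \<and> of_nat k *\<^sub>R x \<in> int_span B"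
  using assms
proof (induction rule: Q.span_induct_alt)
  case base
  then show ?case using ispan_0 by (intro exI[of _ 1]) auto
next
  case (step q b y)
  then obtain k :: nat where k: "k > 0" "of_nat k *\<^sub>R y \<in> int_span B" by blast
  obtain p d where pd: "quotient_of q = (p, d)" by (cases "quotient_of q")
  have d: "d > 0" using quotient_of_denom_pos[OF pd] .
  have qeq: "q = of_int p / of_int d" using quotient_of_div[OF pd] .
  let ?K = "nat d * k"
  have "of_nat ?K *\<^sub>R (qs q b + y) = of_int (p * int k) *\<^sub>R b + of_int d *\<^sub>R (of_nat k *\<^sub>R y)"
    using d by (simp add: qs_def qeq of_rat_divide scaleR_add_right of_rat_of_int_eq)
  also have "\<dots> \<in> int_span B"
    by (intro ispan_add ispan_smult step.hyps k)
  finally show ?case using d k by (intro exI[of _ ?K]) auto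
qed

lemma common_denom:
  fixes u :: "'b \<Rightarrow> rat"
  assumes "finite F"
  shows "\<exists>d::nat. d > 0 \<and> (\<forall>v\<in>F. \<exists>z::int. of_nat d * u v = of_int z)"
  using assms
proof (induction rule: finite_induct)
  case empty then show ?case by (intro exI[of _ 1]) auto
next
  case (insert a F)
  then obtain d :: nat where d: "d > 0" "\<forall>v\<in>F. \<exists>z::int. of_nat d * u v = of_int z" by blast
  obtain p q where pq: "quotient_of (u a) = (p, q)" by (cases "quotient_of (u a)")
  have q: "q > 0" using quotient_of_denom_pos[OF pq] .
  have ua: "u a = of_int p / of_int q" using quotient_of_div[OF pq] .
  show ?case
  proof (intro exI[of _ "d * nat q"] conjI ballI)
    show "0 < d * nat q" using d q by simp
    fix v assume v: "v \<in> insert a F"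
    show "\<exists>z. of_nat (d * nat q) * u v = of_int z"
    proof (cases "v = a")
      case True
      then show ?thesis using q by (intro exI[of _ "int d * p"]) (simp add: ua)
    next
      case False
      then obtain z where "of_nat d * u v = of_int z" using d v by auto
      then show ?thesis using q
      proof (intro exI[of _ "z * q"])
        have "of_nat (d * nat q) * u v = (of_nat d * u v) * of_int q" using q by simp
        then show "of_nat (d * nat q) * u v = of_int (z * q)" using \<open>of_nat d * u v = of_int z\<close> by simp
      qed
    qed
  qed
qed

lemma int_indep_imp_Q:
  assumes "int_independent S"
  shows "Q.independent S"
  unfolding Q.independent_explicit_finite_subsets
proof (intro allI impI ballI)
  fix F u v assume F: "F \<subseteq> S" "finite F" and sum0: "(\<Sum>v\<in>F. qs (u v) v) = 0" and v: "v \<in> F"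
  obtain d :: nat where d: "d > 0" "\<forall>v\<in>F. \<exists>z::int. of_nat d * u v = of_int z"
    using common_denom[of F u] F by blast
  define c where "c w = (SOME z::int. of_nat d * u w = of_int z)" for w
  have c: "of_nat d * u w = of_int (c w)" if "w \<in> F" for w
    unfolding c_def using d(2) that by (metis (mono_tags) someI_ex)
  have "(\<Sum>w\<in>F. of_int (c w) *\<^sub>R w) = (\<Sum>w\<in>F. of_nat d *\<^sub>R qs (u w) w)"
  proof (rule sum.cong[OF refl])
    fix w assume w: "w \<in> F"
    have "real_of_int (c w) = of_rat (of_int (c w))" by simp
    also have "\<dots> = of_rat (of_nat d * u w)" using c[OF w] by simp
    finally show "of_int (c w) *\<^sub>R w = of_nat d *\<^sub>R qs (u w) w" by (simp add: qs_def of_rat_mult)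
  qed
  also have "\<dots> = 0" by (simp add: scaleR_sum_right[symmetric] sum0)
  finally have "c v = 0" using assms F v unfolding int_independent_def by blast
  then show "u v = 0" using c[OF v] d(1) by simp
qed

lemma Q_indep_imp_int:
  assumes "Q.independent S"
  shows "int_independent S"
  unfolding int_independent_def
proof (intro allI impI ballI)
  fix F c x assume F: "finite F" "F \<subseteq> S" and s: "(\<Sum>x\<in>F. of_int (c x) *\<^sub>R x) = 0" and x: "x \<in> F"
  have "(\<Sum>x\<in>F. qs (of_int (c x)) x) = 0" using s by (simp add: qs_def)
  then have "(of_int (c x) :: rat) = 0"
    using Q.independentD[OF assms F(1) F(2), of "\<lambda>x. of_int (c x)"] x by blast
  then show "c x = 0" by simp
qed

lemma group_rank_Qdim:
  assumes T: "finite T" and G: "G \<subseteq> Q.span T"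
  shows "group_rank G = Q.dim G"
proof -
  obtain Bg where Bg: "Bg \<subseteq> G" "Q.independent Bg" "G \<subseteq> Q.span Bg" "card Bg = Q.dim G"
    by (rule Q.basis_exists)
  have finBg: "finite Bg" using Q.independent_span_bound[OF T Bg(2)] Bg(1) G by auto
  let ?K = "{card S | S. S \<subseteq> G \<and> finite S \<and> int_independent S}"
  have mem: "Q.dim G \<in> ?K" using Bg finBg Q_indep_imp_int by (metis (mono_tags, lifting) mem_Collect_eq)
  have le: "k \<le> Q.dim G" if "k \<in> ?K" for k
  proof -
    from that obtain S where S: "k = card S" "S \<subseteq> G" "finite S" "int_independent S" by blast
    have "Q.independent S" using int_indep_imp_Q[OF S(4)] .
    then show ?thesis using Q.independent_span_bound[OF finBg _ ] S Bg by (metis subset_trans)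
  qed
  show ?thesis unfolding group_rank_def
    by (rule cSup_eq_maximum[OF mem]) (use le in blast)
qed

lemma Qspan_ispan_inter:
  assumes Z: "subspace Z"
  shows "Q.span (int_span B \<inter> Z) = Q.span (int_span B) \<inter> Z"
proof
  show "Q.span (int_span B \<inter> Z) \<subseteq> Q.span (int_span B) \<inter> Z"
    by (rule Q.span_minimal) (auto intro: Q.span_base Q.subspace_inter Q_subspace_real[OF Z])
next
  show "Q.span (int_span B) \<inter> Z \<subseteq> Q.span (int_span B \<inter> Z)"
  proof
    fix x assume x: "x \<in> Q.span (int_span B) \<inter> Z"
    then obtain k :: nat where k: "k > 0" "of_nat k *\<^sub>R x \<in> int_span B" using denom_ispan by blast
    have "of_nat k *\<^sub>R x \<in> Z" using x Z by (simp add: subspace_scale)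
    then have "of_nat k *\<^sub>R x \<in> Q.span (int_span B \<inter> Z)" using k by (intro Q.span_base) auto
    then have "qs (1 / of_nat k) (of_nat k *\<^sub>R x) \<in> Q.span (int_span B \<inter> Z)" by (rule Q.span_scale)
    then show "x \<in> Q.span (int_span B \<inter> Z)" using k by (simp add: qs_def of_rat_divide)
  qed
qed

definition indepI :: "(nat \<Rightarrow> 'v::euclidean_space) \<Rightarrow> nat set \<Rightarrow> bool" where
  "indepI n X \<longleftrightarrow> inj_on n X \<and> independent (n ` X)"

definition basI :: "(nat \<Rightarrow> 'v::euclidean_space) \<Rightarrow> nat set \<Rightarrow> nat set \<Rightarrow> bool" where
  "basI n I B \<longleftrightarrow> B \<subseteq> I \<and> card B = DIM('v) \<and> indepI n B"

lemma indepI_insert: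
  assumes "indepI n X" "n j \<notin> span (n ` X)"
  shows "indepI n (insert j X)"
proof -
  have nj: "n j \<notin> n ` X" using assms(2) span_superset by (metis subsetD)
  have "n j \<notin> n ` (X - {j})" using nj by blast
  then have "inj_on n (insert j X)" using assms(1) unfolding indepI_def by simp
  moreover have "independent (insert (n j) (n ` X))" using assms nj unfolding indepI_def by (simp add: independent_insert)
  ultimately show ?thesis unfolding indepI_def by simp
qed

lemma indepI_mono: "indepI n X \<Longrightarrow> Y \<subseteq> X \<Longrightarrow> indepI n Y"
  unfolding indepI_def by (meson image_mono independent_mono inj_on_subset)

lemma indepI_finite: "indepI n X \<Longrightarrow> finite X"
  unfolding indepI_def by (metis finite_image_iff independent_bound)

lemma indepI_card: "indepI n X \<Longrightarrow> card X \<le> DIM('v)" for n :: "nat \<Rightarrow> 'v::euclidean_space"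
  unfolding indepI_def by (metis card_image independent_bound)

lemma extend_indep:
  fixes n :: "nat \<Rightarrow> 'v::euclidean_space"
  assumes B1: "indepI n B1" and J: "finite J"
  obtains B2 where "B2 \<subseteq> J - B1" "indepI n (B1 \<union> B2)" "\<forall>j\<in>J. n j \<in> span (n ` (B1 \<union> B2))"
proof -
  let ?P = "\<lambda>B2. B2 \<subseteq> J - B1 \<and> indepI n (B1 \<union> B2)"
  have "?P {}" using B1 by simp
  then obtain B2 where B2: "?P B2" and min: "\<And>Y. ?P Y \<Longrightarrow> card J - card B2 \<le> card J - card Y"
    using ex_has_least_nat[of ?P "{}" "\<lambda>Y. card J - card Y"] by blast
  have "n j \<in> span (n ` (B1 \<union> B2))" if j: "j \<in> J" for j
  proof (rule ccontr)
    assume nj: "n j \<notin> span (n ` (B1 \<union> B2))"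
    then have jn: "j \<notin> B1 \<union> B2" using span_superset by (metis image_eqI subsetD)
    have "indepI n (insert j (B1 \<union> B2))" using indepI_insert[OF _ nj] B2 by blast
    then have "?P (insert j B2)" using B2 j jn by auto
    then have "card J - card B2 \<le> card J - card (insert j B2)" by (rule min)
    moreover have "finite B2" using B2 J finite_subset by blast
    moreover have "card (insert j B2) \<le> card J"
      using B2 j J by (intro card_mono) auto
    ultimately show False using jn by auto
  qed
  then show ?thesis using that B2 by blast
qed

lemma span_full_basI:
  fixes n :: "nat \<Rightarrow> 'v::euclidean_space"
  assumes "indepI n B" "span (n ` B) = UNIV"
  shows "card B = DIM('v)"
proof -
  have "card (n ` B) = dim (UNIV :: 'v set)"
    using basis_card_eq_dim[of "n ` B" UNIV] assms unfolding indepI_def by auto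
  then show ?thesis using assms(1) unfolding indepI_def by (simp add: card_image)
qed

lemma basI_span:
  fixes n :: "nat \<Rightarrow> 'v::euclidean_space"
  assumes "basI n I B"
  shows "span (n ` B) = UNIV"
proof -
  have "card (n ` B) = dim (UNIV :: 'v set)" "independent (n ` B)" "finite (n ` B)"
    using assms unfolding basI_def indepI_def by (auto simp: card_image independent_bound)
  then show ?thesis using card_eq_dim[of "n ` B" UNIV] by auto
qed

lemma extend_to_basis:
  fixes n :: "nat \<Rightarrow> 'v::euclidean_space"
  assumes A: "indepI n A" "A \<subseteq> I" and I: "finite I" "span (n ` I) = UNIV"
  obtains B where "A \<subseteq> B" "basI n I B"
proof -
  obtain B2 where B2: "B2 \<subseteq> I - A" "indepI n (A \<union> B2)" "\<forall>j\<in>I. n j \<in> span (n ` (A \<union> B2))"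
    using extend_indep[OF A(1) I(1)] by blast
  have "span (n ` I) \<subseteq> span (n ` (A \<union> B2))" using B2(3) by (metis image_subset_iff span_mono span_span)
  then have "span (n ` (A \<union> B2)) = UNIV" using I(2) by auto
  then have "card (A \<union> B2) = DIM('v)" using span_full_basI B2(2) by blast
  then show ?thesis using that[of "A \<union> B2"] B2 A unfolding basI_def by auto
qed

lemma nonzero_elem: "S \<noteq> {0} \<Longrightarrow> 0 \<in> S \<Longrightarrow> \<exists>x\<in>S. x \<noteq> 0"
  by auto

lemma matroid_equal:
  fixes n :: "nat \<Rightarrow> 'v::euclidean_space" and a :: "nat \<Rightarrow> nat"
  assumes finI: "finite I" and ind: "indecomposable n I"
    and exch: "\<And>B i j. basI n I B \<Longrightarrow> i \<in> B \<Longrightarrow> j \<in> I \<Longrightarrow> j \<notin> B \<Longrightarrow>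
                 basI n I (insert j (B - {i})) \<Longrightarrow> a i = a j"
    and i0: "i0 \<in> I"
  shows "\<forall>j\<in>I. a j = a i0"
proof (rule ccontr)
  assume "\<not> (\<forall>j\<in>I. a j = a i0)"
  define I1 where "I1 = {j\<in>I. a j = a i0}"
  define I2 where "I2 = I - I1"
  have I2ne: "I2 \<noteq> {}" using \<open>\<not> _\<close> I1_def I2_def by auto
  have I1ne: "I1 \<noteq> {}" using i0 I1_def by auto
  have spanI: "span (n ` I) = UNIV" using ind unfolding indecomposable_def by auto
  have un: "I1 \<union> I2 = I" and dis12: "I1 \<inter> I2 = {}" using I1_def I2_def by auto
  have nd: "\<not> (\<exists>I1 I2. I1 \<noteq> {} \<and> I2 \<noteq> {} \<and> I1 \<union> I2 = I \<and> I1 \<inter> I2 = {} \<and> span (n ` I1) \<inter> span (n ` I2) = {0})"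
    using ind unfolding indecomposable_def by (rule conjunct2[THEN conjunct2])
  have "span (n ` I1) \<inter> span (n ` I2) \<noteq> {0}"
  proof
    assume h: "span (n ` I1) \<inter> span (n ` I2) = {0}"
    have "\<exists>I1 I2. I1 \<noteq> {} \<and> I2 \<noteq> {} \<and> I1 \<union> I2 = I \<and> I1 \<inter> I2 = {} \<and> span (n ` I1) \<inter> span (n ` I2) = {0}"
      apply (rule exI[of _ I1], rule exI[of _ I2])
      using I1ne I2ne un dis12 h by (intro conjI)
    from nd this show False by (rule notE)
  qed
  moreover have "0 \<in> span (n ` I1) \<inter> span (n ` I2)" by (simp add: span_zero)
  ultimately obtain x where x0: "x \<in> span (n ` I1) \<inter> span (n ` I2)" "x \<noteq> 0"
    using nonzero_elem by blast
  then have x: "x \<noteq> 0" "x \<in> span (n ` I1)" "x \<in> span (n ` I2)" by auto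
  have fI1: "finite I1" "finite I2" using finI I1_def I2_def by auto
  have ie: "indepI n {}" unfolding indepI_def by (simp add: independent_empty)
  obtain B1' where B1': "B1' \<subseteq> I1 - {}" "indepI n ({} \<union> B1')" "\<forall>j\<in>I1. n j \<in> span (n ` ({} \<union> B1'))"
    using extend_indep[OF ie fI1(1)] by blast
  define B1 where "B1 = B1'"
  have B1: "B1 \<subseteq> I1" "indepI n B1" "\<forall>j\<in>I1. n j \<in> span (n ` B1)" using B1' B1_def by auto
  obtain B2 where B2: "B2 \<subseteq> I2 - B1" "indepI n (B1 \<union> B2)" "\<forall>j\<in>I2. n j \<in> span (n ` (B1 \<union> B2))"
    using extend_indep[OF B1(2) fI1(2)] by blast
  define B where "B = B1 \<union> B2"
  have BI: "B \<subseteq> I" using B1 B2 I1_def I2_def B_def by auto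
  have "\<forall>j\<in>I. n j \<in> span (n ` B)"
  proof
    fix j assume j: "j \<in> I"
    show "n j \<in> span (n ` B)"
    proof (cases "j \<in> I1")
      case True
      then have "n j \<in> span (n ` B1)" using B1(3) by blast
      moreover have "span (n ` B1) \<subseteq> span (n ` B)" unfolding B_def by (intro span_mono image_mono) simp
      ultimately show ?thesis by (rule subsetD[rotated])
    next
      case False
      then have "j \<in> I2" using j un by blast
      then show ?thesis using B2(3) B_def by simp
    qed
  qed
  then have "span (n ` I) \<subseteq> span (n ` B)" by (metis image_subset_iff span_mono span_span)
  then have spanB: "span (n ` B) = UNIV" using spanI by auto
  have indB: "indepI n B" using B2(2) B_def by simp
  have basB: "basI n I B" using span_full_basI[OF indB spanB] BI indB unfolding basI_def by auto
  have finB: "finite B" using indB indepI_finite by blast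
  have dis: "B1 \<inter> B2 = {}" using B2(1) by auto
  show False
  proof (cases "\<forall>j\<in>I2. n j \<in> span (n ` B2)")
    case True
    have "span (n ` I2) \<subseteq> span (n ` B2)" using True by (metis image_subset_iff span_mono span_span)
    moreover have "span (n ` I1) \<subseteq> span (n ` B1)" using B1(3) by (metis image_subset_iff span_mono span_span)
    moreover have "n ` B - n ` B1 = n ` B2"
      using indB dis unfolding indepI_def B_def by (auto simp: inj_on_def)
    ultimately have "x = 0"
      using real_vector.span_disjoint_parts[of "n ` B" "n ` B1" x] indB x finB
      unfolding indepI_def B_def by auto
    then show False using x by simp
  next
    case False
    then obtain j where j: "j \<in> I2" "n j \<notin> span (n ` B2)" by blast
    have jB: "j \<notin> B" using j B_def I2_def I1_def B1(1) span_superset by blast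
    let ?P = "\<lambda>T. T \<subseteq> B1 \<and> n j \<in> span (n ` (B2 \<union> T))"
    have "?P B1" using spanB B_def by (simp add: Un_commute)
    then obtain T where T: "?P T" and Tmin: "\<And>T'. ?P T' \<Longrightarrow> card T \<le> card T'"
      using ex_has_least_nat[of ?P B1 card] by blast
    have finT: "finite T" using T finB B_def finite_subset by blast
    have "T \<noteq> {}" using T j by auto
    then obtain i where iT: "i \<in> T" by blast
    have iB1: "i \<in> B1" "i \<in> B" "i \<notin> B2" using iT T dis B_def by auto
    have notin: "n j \<notin> span (n ` (B2 \<union> (T - {i})))"
    proof
      assume "n j \<in> span (n ` (B2 \<union> (T - {i})))"
      then have "?P (T - {i})" using T by auto
      then have "card T \<le> card (T - {i})" by (rule Tmin)
      then show False using finT iT card_Diff1_less[OF finT iT] by simp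
    qed
    have "n ` (B2 \<union> T) = insert (n i) (n ` (B2 \<union> (T - {i})))" using iT by auto
    then have "n j \<in> span (insert (n i) (n ` (B2 \<union> (T - {i}))))" using T by simp
    then have ni: "n i \<in> span (insert (n j) (n ` (B2 \<union> (T - {i}))))"
      using in_span_insert notin by blast
    have nj: "n j \<notin> span (n ` (B - {i}))"
    proof
      assume nj: "n j \<in> span (n ` (B - {i}))"
      have sub: "B2 \<union> (T - {i}) \<subseteq> B - {i}" using iB1 T B_def by auto
      then have "n ` (B2 \<union> (T - {i})) \<subseteq> span (n ` (B - {i}))"
        by (meson image_mono span_superset subset_trans)
      then have "insert (n j) (n ` (B2 \<union> (T - {i}))) \<subseteq> span (n ` (B - {i}))"
        using nj by simp
      then have "n i \<in> span (n ` (B - {i}))" using ni by (metis span_mono span_span subsetD)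
      moreover have "n ` (B - {i}) = n ` B - {n i}"
        using indB iB1 unfolding indepI_def by (auto simp: inj_on_def)
      ultimately show False using indB iB1 unfolding indepI_def dependent_def by auto
    qed
    have indB': "indepI n (insert j (B - {i}))"
      using indepI_insert[OF indepI_mono[OF indB] nj] by blast
    have "card (insert j (B - {i})) = card B"
      using finB jB iB1 by (simp add: card_Diff1_less) (metis Suc_pred card_gt_0_iff empty_iff)
    then have "basI n I (insert j (B - {i}))"
      using basB indB' j I2_def BI unfolding basI_def by auto
    then have "a i = a j" using exch[OF basB iB1(2) _ jB] j I2_def by auto
    moreover have "a i = a i0" using iB1 B1 I1_def by auto
    moreover have "a j \<noteq> a i0" using j I2_def I1_def by auto
    ultimately show False by simp
  qed
qed

lemma orth_zero:
  fixes y :: "'v::euclidean_space"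
  assumes "span S = UNIV" "\<forall>s\<in>S. s \<bullet> y = 0"
  shows "y = 0"
proof -
  have o: "orthogonal y s" if "s \<in> S" for s
  proof -
    have "s \<bullet> y = 0" using assms(2) that by blast
    then show ?thesis unfolding orthogonal_def by (metis inner_commute)
  qed
  have "y \<in> span S" using assms(1) by simp
  then have "orthogonal y y" using orthogonal_to_span o by blast
  then show ?thesis by (simp add: orthogonal_self)
qed

lemma dual_exists:
  fixes n :: "nat \<Rightarrow> 'v::euclidean_space"
  assumes bas: "basI n I B"
  shows "\<exists>e. \<forall>i\<in>B. \<forall>j\<in>B. n j \<bullet> e i = (if i = j then 1 else 0)"
proof -
  have spanB: "span (n ` B) = UNIV" using basI_span[OF bas] .
  have finB: "finite B" using bas indepI_finite unfolding basI_def by blast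
  have "\<exists>v. \<forall>j\<in>B. n j \<bullet> v = (if i = j then 1 else 0)" if i: "i \<in> B" for i
  proof -
    have "span (n ` (B - {i})) \<noteq> UNIV"
    proof
      assume h: "span (n ` (B - {i})) = UNIV"
      have "DIM('v) = dim (span (n ` (B - {i})))" unfolding h by (rule dim_UNIV[symmetric])
      also have "\<dots> = dim (n ` (B - {i}))" by (rule dim_span)
      also have "\<dots> \<le> card (n ` (B - {i}))" by (rule dim_le_card[OF span_superset]) (use finB in simp)
      also have "\<dots> \<le> card (B - {i})" by (rule card_image_le) (use finB in simp)
      also have "\<dots> < card B" using finB i by (rule card_Diff1_less)
      moreover have "card B = DIM('v)" using bas unfolding basI_def by (elim conjE)
      ultimately show False by linarith
    qed
    then obtain v where v: "v \<noteq> 0" "\<forall>x\<in>span (n ` (B - {i})). v \<bullet> x = 0"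
      using span_not_UNIV_orthogonal by metis
    have vj: "n j \<bullet> v = 0" if "j \<in> B" "j \<noteq> i" for j
    proof -
      have "n j \<in> span (n ` (B - {i}))" using that by (intro span_base) auto
      then have "v \<bullet> n j = 0" using v(2) by blast
      then show ?thesis by (metis inner_commute)
    qed
    have vi: "n i \<bullet> v \<noteq> 0"
    proof
      assume "n i \<bullet> v = 0"
      then have "\<forall>s\<in>n ` B. s \<bullet> v = 0" using vj by (metis imageE)
      then show False using orth_zero[OF spanB] v(1) by metis
    qed
    show ?thesis
    proof (rule exI[of _ "v /\<^sub>R (n i \<bullet> v)"], intro ballI)
      fix j assume j: "j \<in> B"
      show "n j \<bullet> (v /\<^sub>R (n i \<bullet> v)) = (if i = j then 1 else 0)"
      proof (cases "i = j")
        case True then show ?thesis using vi by simp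
      next
        case False then show ?thesis using vj[OF j] by simp
      qed
    qed
  qed
  then have "\<forall>i\<in>B. \<exists>v. \<forall>j\<in>B. n j \<bullet> v = (if i = j then 1 else 0)" by (rule ballI)
  then show ?thesis by (rule bchoice)
qed

lemma translate_hyp: "translate t {x. a \<bullet> x = b} = {x. a \<bullet> x = b + a \<bullet> t}"
  unfolding translate_def
proof (intro set_eqI iffI)
  fix x assume "x \<in> (\<lambda>x. x + t) ` {x. a \<bullet> x = b}"
  then show "x \<in> {x. a \<bullet> x = b + a \<bullet> t}" by (auto simp: inner_add_right)
next
  fix x assume x: "x \<in> {x. a \<bullet> x = b + a \<bullet> t}"
  have "x = (x - t) + t" by simp
  moreover have "a \<bullet> (x - t) = b" using x by (simp add: inner_diff_right)
  ultimately show "x \<in> (\<lambda>x. x + t) ` {x. a \<bullet> x = b}" by blast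
qed

locale geo =
  fixes \<Gamma> :: "'v::euclidean_space set" and C :: "'v set set" and W :: "nat \<Rightarrow> 'v set"
    and n :: "nat \<Rightarrow> 'v" and c :: "nat \<Rightarrow> real" and f :: nat and B0 :: "'v set" and Qp :: "'v set"
  assumes B0: "finite B0" "\<Gamma> = int_span B0"
    and C_inv: "\<forall>H\<in>C. \<forall>g\<in>\<Gamma>. translate g H \<in> C"
    and W_in: "\<forall>i\<in>{1..f}. W i \<in> C"
    and W_eq: "\<forall>i\<in>{1..f}. n i \<noteq> 0 \<and> W i = {x. n i \<bullet> x = c i}"
    and Qp: "finite Qp" "vertex_set DIM('v) C = {q + g | q g. q \<in> Qp \<and> g \<in> \<Gamma>}"
begin

definition U where "U = Q.span \<Gamma>"
definition Z where "Z A = {x. \<forall>i\<in>A. n i \<bullet> x = 0}"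
definition N where "N = Q.dim U"
definition a where "a i = N - Q.dim (U \<inter> Z {i})"

lemma U_B0: "U = Q.span B0"
  unfolding U_def using B0 Qspan_ispan by metis

lemma Z_subspace: "subspace (Z A)"
  unfolding Z_def subspace_def by (auto simp: inner_add_right)

end

locale geoB = geo \<Gamma> C W n c f B0 Qp
  for \<Gamma> :: "'v::euclidean_space set" and C :: "'v set set" and W :: "nat \<Rightarrow> 'v set"
    and n :: "nat \<Rightarrow> 'v" and c :: "nat \<Rightarrow> real" and f :: nat and B0 :: "'v set" and Qp :: "'v set" +
  fixes B :: "nat set" and e :: "nat \<Rightarrow> 'v"
  assumes bas: "basI n {1..f} B"
    and dual: "\<forall>i\<in>B. \<forall>j\<in>B. n j \<bullet> e i = (if i = j then 1 else 0)"
begin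

definition Psi where "Psi A x = (\<Sum>i\<in>A. (n i \<bullet> x) *\<^sub>R e i)"

lemma finB: "finite B" using bas indepI_finite unfolding basI_def by blast
lemma BI: "B \<subseteq> {1..f}" using bas unfolding basI_def by blast
lemma spanB: "span (n ` B) = UNIV" using basI_span[OF bas] .

lemma Psi_linear: "linear (Psi A)"
  unfolding Psi_def
  by (rule linearI) (simp_all add: inner_add_right scaleR_add_left sum.distrib scaleR_sum_right)

lemma Psi_Q_linear: "Vector_Spaces.linear qs qs (Psi A)"
  using real_linear_Q[OF Psi_linear] .

lemma inner_comb:
  assumes "A \<subseteq> B" "j \<in> B"
  shows "n j \<bullet> (\<Sum>i\<in>A. t i *\<^sub>R e i) = (if j \<in> A then t j else 0)"
proof -
  have fA: "finite A" using assms finB finite_subset by blast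
  have "n j \<bullet> (\<Sum>i\<in>A. t i *\<^sub>R e i) = (\<Sum>i\<in>A. t i * (n j \<bullet> e i))"
    by (simp add: inner_sum_right)
  also have "\<dots> = (\<Sum>i\<in>A. if i = j then t i else 0)"
    using assms dual by (intro sum.cong) auto
  also have "\<dots> = (if j \<in> A then t j else 0)"
    using fA by (simp add: sum.delta')
  finally show ?thesis .
qed

lemma inner_Psi:
  assumes "A \<subseteq> B" "j \<in> B"
  shows "n j \<bullet> Psi A x = (if j \<in> A then n j \<bullet> x else 0)"
  unfolding Psi_def using inner_comb[OF assms] .

lemma uniq:
  assumes "\<forall>j\<in>B. n j \<bullet> x = n j \<bullet> y"
  shows "x = y"
proof -
  have "\<forall>s\<in>n ` B. s \<bullet> (x - y) = 0" using assms by (auto simp: inner_diff_right)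
  then have "x - y = 0" by (rule orth_zero[OF spanB])
  then show ?thesis by simp
qed

lemma ker_Psi:
  assumes "A \<subseteq> B"
  shows "Psi A x = 0 \<longleftrightarrow> x \<in> Z A"
proof
  assume h: "Psi A x = 0"
  show "x \<in> Z A" unfolding Z_def
  proof (intro CollectI ballI)
    fix i assume "i \<in> A"
    then show "n i \<bullet> x = 0" using inner_Psi[OF assms, of i x] h assms by auto
  qed
next
  assume "x \<in> Z A"
  then show "Psi A x = 0" unfolding Psi_def Z_def by simp
qed

lemma ker_Psi_set:
  assumes "A \<subseteq> B"
  shows "U \<inter> {x. Psi A x = 0} = U \<inter> Z A"
  using ker_Psi[OF assms] by auto

end

lemma Qdim_zero: "Q.dim {0::'a::real_vector} = 0"
proof -
  have "Q.dim {0::'a} = Q.dim (Q.span {} :: 'a set)" by simp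
  also have "\<dots> = Q.dim ({} :: 'a set)" by (rule Q.dim_span)
  also have "\<dots> = 0" using Q.dim_eq_card_independent[OF Q.independent_empty] by simp
  finally show ?thesis .
qed

context geoB begin

lemma point_vertex:
  assumes g: "\<forall>i\<in>B. g i \<in> \<Gamma>"
  shows "(\<Sum>i\<in>B. (c i + n i \<bullet> g i) *\<^sub>R e i) \<in> vertex_set DIM('v) C"
proof -
  define t where "t i = c i + n i \<bullet> g i" for i
  define z where "z = (\<Sum>i\<in>B. t i *\<^sub>R e i)"
  define H where "H i = translate (g i) (W i)" for i
  have Hi: "H i = {x. n i \<bullet> x = t i}" if "i \<in> B" for i
  proof -
    have "i \<in> {1..f}" using that BI by blast
    then have "W i = {x. n i \<bullet> x = c i}" using W_eq by blast
    then show ?thesis unfolding H_def t_def by (simp add: translate_hyp)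
  qed
  have nz: "n j \<bullet> z = t j" if "j \<in> B" for j
    unfolding z_def using inner_comb[of B j t] that by simp
  have SC: "H ` B \<subseteq> C"
  proof
    fix h assume "h \<in> H ` B"
    then obtain i where i: "i \<in> B" "h = H i" by blast
    have "W i \<in> C" using W_in BI i(1) by blast
    then show "h \<in> C" using C_inv g i unfolding H_def by blast
  qed
  have inj: "inj_on H B"
  proof (rule inj_onI, rule ccontr)
    fix i j assume ij: "i \<in> B" "j \<in> B" "H i = H j" "i \<noteq> j"
    have "n i \<bullet> (z + e j) = t i" using nz[OF ij(1)] dual ij by (simp add: inner_add_right)
    then have "z + e j \<in> H j" using ij Hi by auto
    moreover have "n j \<bullet> (z + e j) = t j + 1" using nz[OF ij(2)] dual ij by (simp add: inner_add_right)
    ultimately show False using Hi[OF ij(2)] by simp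
  qed
  have card: "card (H ` B) = DIM('v)"
    using card_image[OF inj] bas unfolding basI_def by simp
  have inter: "\<Inter>(H ` B) = {z}"
  proof (intro set_eqI iffI)
    fix x assume "x \<in> \<Inter>(H ` B)"
    then have "\<forall>j\<in>B. n j \<bullet> x = n j \<bullet> z" using Hi nz by auto
    then show "x \<in> {z}" using uniq by simp
  next
    fix x assume "x \<in> {z}"
    then show "x \<in> \<Inter>(H ` B)" using Hi nz by auto
  qed
  have "z \<in> vertex_set DIM('v) C"
    unfolding vertex_set_def using SC card inter finB by blast
  then show ?thesis unfolding z_def t_def .
qed

lemma sum_if_subset:
  assumes "A \<subseteq> B"
  shows "(\<Sum>i\<in>B. (if i \<in> A then F i else 0)) = (\<Sum>i\<in>A. F i)"
proof -
  have "(\<Sum>i\<in>B. (if i \<in> A then F i else 0)) = (\<Sum>i\<in>B \<inter> A. F i)"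
    using finB by (simp add: sum.inter_restrict)
  also have "B \<inter> A = A" using assms by blast
  finally show ?thesis .
qed

lemma Psi_in_U:
  assumes A: "A \<subseteq> B" and \<gamma>: "\<gamma> \<in> \<Gamma>"
  shows "Psi A \<gamma> \<in> U"
proof -
  define g where "g k i = (if i \<in> A then of_nat k *\<^sub>R \<gamma> else 0)" for k :: nat and i
  define z where "z k = (\<Sum>i\<in>B. (c i + n i \<bullet> g k i) *\<^sub>R e i)" for k
  have gG: "\<forall>i\<in>B. g k i \<in> \<Gamma>" for k
    unfolding g_def using \<gamma> B0(2) ispan_nmult ispan_0 by auto
  have ex: "\<exists>q. q \<in> Qp \<and> z k - q \<in> \<Gamma>" for k
  proof -
    have "z k \<in> vertex_set DIM('v) C" unfolding z_def by (rule point_vertex[OF gG])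
    then obtain q h where "q \<in> Qp" "h \<in> \<Gamma>" "z k = q + h" using Qp(2) by blast
    then show ?thesis by (intro exI[of _ q]) simp
  qed
  define qk where "qk k = (SOME q. q \<in> Qp \<and> z k - q \<in> \<Gamma>)" for k
  have qk: "qk k \<in> Qp" "z k - qk k \<in> \<Gamma>" for k
    using someI_ex[OF ex[of k]] unfolding qk_def by auto
  have "\<not> inj_on qk {..card Qp}"
  proof
    assume "inj_on qk {..card Qp}"
    then have "card (qk ` {..card Qp}) = Suc (card Qp)" by (simp add: card_image)
    moreover have "card (qk ` {..card Qp}) \<le> card Qp"
      using qk(1) Qp(1) by (intro card_mono) auto
    ultimately show False by simp
  qed
  then obtain k1 k2 where k: "k1 \<noteq> k2" "qk k1 = qk k2" unfolding inj_on_def by blast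
  have dG: "z k1 - z k2 \<in> \<Gamma>"
  proof -
    have "z k1 - z k2 = (z k1 - qk k1) - (z k2 - qk k2)" using k(2) by simp
    then show ?thesis using qk(2) B0(2) ispan_diff by metis
  qed
  have "z k1 - z k2 = (\<Sum>i\<in>B. (n i \<bullet> g k1 i - n i \<bullet> g k2 i) *\<^sub>R e i)"
    unfolding z_def by (simp add: sum_subtractf[symmetric] scaleR_diff_left algebra_simps)
  also have "\<dots> = (\<Sum>i\<in>B. (if i \<in> A then ((real k1 - real k2) * (n i \<bullet> \<gamma>)) *\<^sub>R e i else 0))"
    unfolding g_def by (intro sum.cong refl) (simp add: algebra_simps)
  also have "\<dots> = (\<Sum>i\<in>A. ((real k1 - real k2) * (n i \<bullet> \<gamma>)) *\<^sub>R e i)"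
    by (rule sum_if_subset[OF A])
  also have "\<dots> = (real k1 - real k2) *\<^sub>R Psi A \<gamma>"
    unfolding Psi_def by (simp add: scaleR_sum_right)
  finally have eq: "z k1 - z k2 = (real k1 - real k2) *\<^sub>R Psi A \<gamma>" .
  have ne: "real k1 - real k2 \<noteq> 0" using k(1) by simp
  have "qs (1 / (of_nat k1 - of_nat k2)) (z k1 - z k2) \<in> Q.span \<Gamma>"
    by (intro Q.span_scale Q.span_base dG)
  moreover have "qs (1 / (of_nat k1 - of_nat k2)) (z k1 - z k2) = Psi A \<gamma>"
    using ne unfolding eq qs_def by (simp add: of_rat_divide of_rat_diff)
  ultimately show ?thesis unfolding U_def by simp
qed

lemma Psi_U_sub:
  assumes A: "A \<subseteq> B"
  shows "Psi A ` U \<subseteq> U"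
proof -
  interpret L: Vector_Spaces.linear qs qs "Psi A" by (rule Psi_Q_linear)
  have "Psi A ` U = Q.span (Psi A ` \<Gamma>)" unfolding U_def by (rule L.span_image[symmetric])
  also have "\<dots> \<subseteq> Q.span U" using Psi_in_U[OF A] by (intro Q.span_mono) auto
  also have "\<dots> = U" unfolding U_def by (rule Q.span_span)
  finally show ?thesis .
qed

lemma Psi_image_span: "Psi A ` U = Q.span (Psi A ` B0)"
proof -
  interpret L: Vector_Spaces.linear qs qs "Psi A" by (rule Psi_Q_linear)
  show ?thesis unfolding U_B0 by (rule L.span_image[symmetric])
qed

lemma dim_single:
  assumes j: "j \<in> B"
  shows "Q.dim (Psi {j} ` U) = a j"
proof -
  have "N = Q.dim (U \<inter> {x. Psi {j} x = 0}) + Q.dim (Psi {j} ` U)"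
    unfolding N_def U_B0 by (rule rank_nullity_Q[OF Psi_Q_linear B0(1)])
  moreover have "U \<inter> {x. Psi {j} x = 0} = U \<inter> Z {j}" using ker_Psi_set j by simp
  ultimately show ?thesis unfolding a_def by simp
qed

lemma Psi_insert: "j \<notin> A \<Longrightarrow> finite A \<Longrightarrow> Psi (insert j A) x = Psi A x + Psi {j} x"
  unfolding Psi_def by (simp add: add.commute)

lemma dim_image_U:
  assumes "A \<subseteq> B"
  shows "Q.dim (Psi A ` U) = sum a A"
proof -
  have "finite A" using assms finB finite_subset by blast
  then show ?thesis using assms
  proof (induction A rule: finite_induct)
    case empty
    have "U \<noteq> {}" unfolding U_def using Q.span_zero by blast
    then have "Psi {} ` U = {0}" unfolding Psi_def by auto
    then show ?case using Qdim_zero by simp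
  next
    case (insert j A)
    have AB: "A \<subseteq> B" and jB: "j \<in> B" using insert.prems by auto
    have jA: "j \<notin> A" by fact
    let ?P = "Psi (insert j A)"
    let ?X = "?P ` U"
    have rn: "Q.dim ?X = Q.dim (?X \<inter> {x. Psi {j} x = 0}) + Q.dim (Psi {j} ` ?X)"
      unfolding Psi_image_span[of "insert j A"]
      by (rule rank_nullity_Q[OF Psi_Q_linear]) (use B0(1) in simp)
    have PjP: "Psi {j} (?P x) = Psi {j} x" for x
      unfolding Psi_def[of "{j}"] using inner_Psi[of "insert j A" j x] insert.prems jB by simp
    have img: "Psi {j} ` ?X = Psi {j} ` U"
      by (simp add: image_image PjP)
    have PA: "Psi A (Psi A u) = Psi A u" for u
    proof -
      have "Psi A (Psi A u) = (\<Sum>i\<in>A. (n i \<bullet> Psi A u) *\<^sub>R e i)" by (simp add: Psi_def)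
      also have "\<dots> = (\<Sum>i\<in>A. (n i \<bullet> u) *\<^sub>R e i)"
        using inner_Psi[OF AB] AB by (intro sum.cong refl) auto
      finally show ?thesis by (simp add: Psi_def)
    qed
    have PjA: "Psi {j} (Psi A u) = 0" for u
      unfolding Psi_def[of "{j}"] using inner_Psi[OF AB jB] jA by simp
    have ker: "?X \<inter> {x. Psi {j} x = 0} = Psi A ` U"
    proof (intro set_eqI iffI)
      fix y assume "y \<in> ?X \<inter> {x. Psi {j} x = 0}"
      then obtain u where u: "u \<in> U" "y = ?P u" "Psi {j} y = 0" by blast
      have "Psi {j} u = 0" using u PjP by simp
      then have "y = Psi A u" using u Psi_insert[OF jA insert.hyps(1)] by simp
      then show "y \<in> Psi A ` U" using u by blast
    next
      fix y assume "y \<in> Psi A ` U"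
      then obtain u where u: "u \<in> U" "y = Psi A u" by blast
      have yU: "y \<in> U" using Psi_U_sub[OF AB] u by blast
      have "?P y = y" using Psi_insert[OF jA insert.hyps(1), of y] u PA PjA by simp
      then have "y \<in> ?X" using yU by (metis image_eqI)
      moreover have "Psi {j} y = 0" using u PjA by simp
      ultimately show "y \<in> ?X \<inter> {x. Psi {j} x = 0}" by blast
    qed
    have "Q.dim ?X = Q.dim (Psi A ` U) + a j"
      using rn ker img dim_single[OF jB] by simp
    then show ?case using insert.IH[OF AB] insert.hyps by simp
  qed
qed

lemma main_count:
  assumes "A \<subseteq> B"
  shows "Q.dim (U \<inter> Z A) + sum a A = N"
proof -
  have "N = Q.dim (U \<inter> {x. Psi A x = 0}) + Q.dim (Psi A ` U)"
    unfolding N_def U_B0 by (rule rank_nullity_Q[OF Psi_Q_linear B0(1)])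
  then show ?thesis using ker_Psi_set[OF assms] dim_image_U[OF assms] by simp
qed

lemma basis_sum: "sum a B = N"
proof -
  have "U \<inter> Z B = {0}"
  proof (intro set_eqI iffI)
    fix x assume "x \<in> U \<inter> Z B"
    then have "\<forall>j\<in>B. n j \<bullet> x = n j \<bullet> 0" unfolding Z_def by simp
    then show "x \<in> {0}" using uniq by simp
  next
    fix x :: 'v assume "x \<in> {0}"
    then show "x \<in> U \<inter> Z B" unfolding U_def Z_def using Q.span_zero by simp
  qed
  then show ?thesis using main_count[of B] Qdim_zero[where 'a='v] by simp
qed

end

theorem mainTheorem6:
  fixes \<Gamma> :: "'v::euclidean_space set"
    and C :: "'v set set"
    and W :: "nat \<Rightarrow> 'v set"
    and n :: "nat \<Rightarrow> 'v"
    and c :: "nat \<Rightarrow> real"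
    and f :: nat
  assumes \<Gamma>_free: "fg_free_subgroup \<Gamma>"
    and \<Gamma>_dense: "closure \<Gamma> = UNIV"
    and C_count: "countable C"
    and C_hyp: "\<forall>H\<in>C. affine_hyperplane H"
    and C_inv: "\<forall>H\<in>C. \<forall>g\<in>\<Gamma>. translate g H \<in> C"
    and C_orbits: "finitely_many_orbits \<Gamma> C"
    and C_span: "span (normals C) = UNIV"
    and W_in: "\<forall>i\<in>{1..f}. W i \<in> C"
    and W_inj: "inj_on W {1..f}"
    and f_gt: "f > DIM('v)"
    and W_eq: "\<forall>i\<in>{1..f}. n i \<noteq> 0 \<and> W i = {x. n i \<bullet> x = c i}"
    and W_indec: "indecomposable n {1..f}"
    and P_orbits: "finitely_many_point_orbits \<Gamma> (vertex_set DIM('v) C)"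
  shows "(\<forall>l \<le> DIM('v). \<forall>A \<in> I_set W f l.
            real (group_rank (stabilizer \<Gamma> (W_int W A)))
              = real l * real (group_rank \<Gamma>) / real DIM('v))
         \<and> DIM('v) dvd group_rank \<Gamma>"
proof -
  obtain B0 where B0: "finite B0" "int_independent B0" "\<Gamma> = int_span B0"
    using \<Gamma>_free unfolding fg_free_subgroup_def by blast
  obtain Qp where Qp: "finite Qp" "vertex_set DIM('v) C = {q + g | q g. q \<in> Qp \<and> g \<in> \<Gamma>}"
    using P_orbits unfolding finitely_many_point_orbits_def by blast
  interpret G: geo \<Gamma> C W n c f B0 Qp
    by unfold_locales (use B0 Qp C_inv W_in W_eq in auto)
  have Gsub: "\<Gamma> \<subseteq> Q.span B0" using B0(3) ispan_Qspan by blast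
  have rankG: "group_rank \<Gamma> = G.N"
  proof -
    have "group_rank \<Gamma> = Q.dim \<Gamma>" by (rule group_rank_Qdim[OF B0(1) Gsub])
    also have "\<dots> = Q.dim G.U" unfolding G.U_def by (rule Q.dim_span[symmetric])
    finally show ?thesis unfolding G.N_def .
  qed
  have finI: "finite {1..f}" by simp
  have spanI: "span (n ` {1..f}) = UNIV" using W_indec unfolding indecomposable_def by blast
  have bsum: "sum G.a B = G.N" if bas: "basI n {1..f} B" for B
  proof -
    obtain e where e: "\<forall>i\<in>B. \<forall>j\<in>B. n j \<bullet> e i = (if i = j then 1 else 0)"
      using dual_exists[OF bas] by blast
    interpret GB: geoB \<Gamma> C W n c f B0 Qp B e
      by (rule geoB.intro[OF G.geo_axioms]) (unfold_locales, fact bas, fact e)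
    show ?thesis by (rule GB.basis_sum)
  qed
  have exch: "G.a i = G.a j" if "basI n {1..f} B" "i \<in> B" "j \<in> {1..f}" "j \<notin> B"
      "basI n {1..f} (insert j (B - {i}))" for B i j
  proof -
    have finB: "finite B" using that(1) indepI_finite unfolding basI_def by blast
    have "sum G.a B = G.a i + sum G.a (B - {i})" using finB that(2) by (rule sum.remove)
    moreover have "sum G.a (insert j (B - {i})) = G.a j + sum G.a (B - {i})"
      using finB that(4) by simp
    ultimately show ?thesis using bsum[OF that(1)] bsum[OF that(5)] by simp
  qed
  have one: "1 \<in> {1..f}" using f_gt by simp
  have aeq: "\<forall>j\<in>{1..f}. G.a j = G.a 1"
    by (rule matroid_equal[OF finI W_indec exch one]) auto
  define \<alpha> where "\<alpha> = G.a 1"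
  have ie: "indepI n {}" unfolding indepI_def by (simp add: independent_empty)
  obtain B where B: "{} \<subseteq> B" "basI n {1..f} B"
    using extend_to_basis[OF ie _ finI spanI] by blast
  have "sum G.a B = card B * \<alpha>"
    using B(2) aeq unfolding basI_def \<alpha>_def by (simp add: subset_iff)
  then have N: "G.N = DIM('v) * \<alpha>" using bsum[OF B(2)] B(2) unfolding basI_def by simp
  have dvd: "DIM('v) dvd group_rank \<Gamma>" using rankG N by simp
  have part1: "real (group_rank (stabilizer \<Gamma> (W_int W A)))
              = real l * real (group_rank \<Gamma>) / real DIM('v)"
    if l: "l \<le> DIM('v)" and A: "A \<in> I_set W f l" for l A
  proof -
    have AI: "A \<subseteq> {1..f}" and cardA: "card A = DIM('v) - l"
      and aff: "aff_dim (W_int W A) = int l" using A unfolding I_set_def by auto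
    have finA: "finite A" using AI finite_subset by blast
    have WA: "W_int W A = {x. \<forall>i\<in>A. n i \<bullet> x = c i}"
      unfolding W_int_def using W_eq AI by auto
    have "W_int W A \<noteq> {}"
    proof
      assume "W_int W A = {}"
      then have "aff_dim (W_int W A) = -1" by simp
      then show False using aff by simp
    qed
    then obtain p where p: "p \<in> W_int W A" by blast
    have stab: "stabilizer \<Gamma> (W_int W A) = \<Gamma> \<inter> G.Z A"
    proof (intro set_eqI iffI)
      fix g assume "g \<in> stabilizer \<Gamma> (W_int W A)"
      then have g: "g \<in> \<Gamma>" "translate g (W_int W A) = W_int W A" unfolding stabilizer_def by auto
      have "p + g \<in> W_int W A" using g(2) p unfolding translate_def by (metis add.commute image_eqI)
      then have "\<forall>i\<in>A. n i \<bullet> g = 0" using p unfolding WA by (auto simp: inner_add_right)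
      then show "g \<in> \<Gamma> \<inter> G.Z A" using g unfolding G.Z_def by auto
    next
      fix g assume g: "g \<in> \<Gamma> \<inter> G.Z A"
      have "translate g (W_int W A) = W_int W A"
        unfolding WA translate_def
      proof (intro set_eqI iffI)
        fix y assume "y \<in> (\<lambda>x. x + g) ` {x. \<forall>i\<in>A. n i \<bullet> x = c i}"
        then show "y \<in> {x. \<forall>i\<in>A. n i \<bullet> x = c i}" using g unfolding G.Z_def by (auto simp: inner_add_right)
      next
        fix y assume y: "y \<in> {x. \<forall>i\<in>A. n i \<bullet> x = c i}"
        have "y - g \<in> {x. \<forall>i\<in>A. n i \<bullet> x = c i}" using y g unfolding G.Z_def by (auto simp: inner_diff_right)
        moreover have "y = (y - g) + g" by simp
        ultimately show "y \<in> (\<lambda>x. x + g) ` {x. \<forall>i\<in>A. n i \<bullet> x = c i}" by blast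
      qed
      then show "g \<in> stabilizer \<Gamma> (W_int W A)" using g unfolding stabilizer_def by auto
    qed
    have tr: "(+) (- p) ` W_int W A = G.Z A"
    proof (intro set_eqI iffI)
      fix z assume "z \<in> (+) (- p) ` W_int W A"
      then obtain x where x: "x \<in> W_int W A" "z = - p + x" by blast
      then show "z \<in> G.Z A" using p unfolding WA G.Z_def by (auto simp: inner_add_right inner_diff_right)
    next
      fix z assume z: "z \<in> G.Z A"
      have "p + z \<in> W_int W A" using p z unfolding WA G.Z_def by (auto simp: inner_add_right)
      moreover have "z = - p + (p + z)" by simp
      ultimately show "z \<in> (+) (- p) ` W_int W A" by blast
    qed
    have "aff_dim (W_int W A) = int (dim ((+) (- p) ` W_int W A))"
      by (rule aff_dim_eq_dim[OF hull_inc[OF p]])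
    then have dimZ: "dim (G.Z A) = l" using aff tr by simp
    have orth: "{y \<in> UNIV. \<forall>x\<in>span (n ` A). orthogonal x y} = G.Z A"
    proof (intro set_eqI iffI)
      fix y assume y: "y \<in> {y \<in> UNIV. \<forall>x\<in>span (n ` A). orthogonal x y}"
      have "n i \<bullet> y = 0" if "i \<in> A" for i
      proof -
        have "n i \<in> span (n ` A)" using that by (intro span_base imageI)
        then have "orthogonal (n i) y" using y by blast
        then show ?thesis unfolding orthogonal_def .
      qed
      then show "y \<in> G.Z A" unfolding G.Z_def by blast
    next
      fix y assume y: "y \<in> G.Z A"
      have yo: "orthogonal y z" if "z \<in> n ` A" for z
      proof -
        obtain i where "i \<in> A" "z = n i" using \<open>z \<in> n ` A\<close> by blast
        then have "z \<bullet> y = 0" using y unfolding G.Z_def by blast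
        then show ?thesis unfolding orthogonal_def by (metis inner_commute)
      qed
      have "orthogonal x y" if "x \<in> span (n ` A)" for x
      proof -
        have "orthogonal y x" using orthogonal_to_span[OF that yo] .
        then show ?thesis by (metis orthogonal_commute)
      qed
      then show "y \<in> {y \<in> UNIV. \<forall>x\<in>span (n ` A). orthogonal x y}" by blast
    qed
    have "dim {y \<in> UNIV. \<forall>x\<in>span (n ` A). orthogonal x y} + dim (span (n ` A)) = dim (UNIV :: 'v set)"
      by (rule dim_subspace_orthogonal_to_vectors[OF subspace_span subspace_UNIV subset_UNIV])
    then have "dim (G.Z A) + dim (n ` A) = DIM('v)" unfolding orth dim_span dim_UNIV .
    then have dimA: "dim (n ` A) = card A" using dimZ cardA l by linarith
    have c1: "card (n ` A) \<le> card A" by (rule card_image_le[OF finA])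
    have c2: "dim (n ` A) \<le> card (n ` A)" by (rule dim_le_card[OF span_superset]) (use finA in simp)
    have cA: "card (n ` A) = card A" using c1 c2 dimA by linarith
    have injA: "inj_on n A" by (rule eq_card_imp_inj_on[OF finA cA])
    have cd: "card (n ` A) = dim (n ` A)" using cA dimA by simp
    have fnA: "finite (n ` A)" using finA by simp
    have indA: "independent (n ` A)"
      using card_eq_dim[OF subset_refl cd fnA] span_superset[of "n ` A"] by (rule iffD2)
    have iA: "indepI n A" unfolding indepI_def using injA indA by simp
    obtain B where B: "A \<subseteq> B" "basI n {1..f} B"
      using extend_to_basis[OF iA AI finI spanI] by blast
    obtain e where e: "\<forall>i\<in>B. \<forall>j\<in>B. n j \<bullet> e i = (if i = j then 1 else 0)"
      using dual_exists[OF B(2)] by blast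
    interpret GB: geoB \<Gamma> C W n c f B0 Qp B e
      by (rule geoB.intro[OF G.geo_axioms]) (unfold_locales, fact B(2), fact e)
    have mc: "Q.dim (G.U \<inter> G.Z A) + sum G.a A = G.N" by (rule GB.main_count[OF B(1)])
    have sA: "sum G.a A = card A * \<alpha>" using aeq AI unfolding \<alpha>_def by (simp add: subset_iff)
    have "group_rank (\<Gamma> \<inter> G.Z A) = Q.dim (\<Gamma> \<inter> G.Z A)"
      by (rule group_rank_Qdim[OF B0(1)]) (use Gsub in blast)
    also have "\<dots> = Q.dim (Q.span (\<Gamma> \<inter> G.Z A))" by (rule Q.dim_span[symmetric])
    also have "Q.span (\<Gamma> \<inter> G.Z A) = G.U \<inter> G.Z A"
      unfolding G.U_def using Qspan_ispan_inter[OF G.Z_subspace, of B0 A] B0(3) by simp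
    finally have rk: "group_rank (stabilizer \<Gamma> (W_int W A)) = Q.dim (G.U \<inter> G.Z A)"
      using stab by simp
    have "Q.dim (G.U \<inter> G.Z A) = l * \<alpha>"
    proof -
      have "Q.dim (G.U \<inter> G.Z A) + (DIM('v) - l) * \<alpha> = DIM('v) * \<alpha>" using mc sA cardA N by simp
      moreover have "DIM('v) * \<alpha> = l * \<alpha> + (DIM('v) - l) * \<alpha>" using l
        by (metis add_mult_distrib le_add_diff_inverse)
      ultimately show ?thesis by simp
    qed
    then have "real (group_rank (stabilizer \<Gamma> (W_int W A))) = real l * real \<alpha>" using rk by simp
    also have "\<dots> = real l * real (group_rank \<Gamma>) / real DIM('v)"
      using rankG N by simp
    finally show ?thesis .
  qed
  show ?thesis using part1 dvd by blast
qed

end
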